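(* Let $\Pi_n=\{\pi_1,\ldots,\pi_n\}$ be a finite set of policies of a discrete mean-field game (setting in the context) and suppose $J$ is $\mu$-diff-affine. Let $M\in\mathbb R^{n\times n}$ with $M_{ij}=J(\pi_i,\mu^{\pi_j})$ and consider the symmetric two-player normal-form game where player 1 has payoff matrix $M$ and player 2 has payoff matrix $M^\top$. If $\nu\in\Delta(\{1,\ldots,n\})$ is a symmetric Nash equilibrium of this game (i.e. $e_k^\top M\nu\le\nu^\top M\nu$ for all $k$), then, viewing $\nu$ as a distribution over $\Pi_n$, $\nu$ is a Nash equilibrium of the restricted mean-field game: $J(\pi_k,\mu(\nu))-J(\pi(\nu),\mu(\nu))\le0$ for all $k=1,\ldots,n$.
   Context: A discrete mean-field game consists of finite state set $\mathcal X$, finite action set $\mathcal A$, reward $r:\mathcal X\times\mathcal A\times\Delta(\mathcal X)\to\mathbb R$, transitions $p(x'\mid x,a)$ independent of the population distribution, initial distribution $\mu_0$. A policy is $\pi:\mathcal X\to\Delta(\mathcal A)$; $\mu^\pi$ is its state occupancy measure (discounted or finite-horizon); $J(\pi,\mu)=\sum_{x,a}\mu^\pi(x)\pi(x,a)r(x,a,\mu)$. For $\nu\in\Delta(\Pi_n)$, $\mu(\nu)=\sum_j\nu(\pi_j)\mu^{\pi_j}$ and $J(\pi(\nu),\mu)=\sum_i\nu(\pi_i)J(\pi_i,\mu)$, where $\pi(\nu)$ samples a policy from $\nu$ at the start and plays it. $J$ is $\mu$-diff-affine if for all policies $\pi,\pi'$ the map $\mu\mapsto J(\pi,\mu)-J(\pi',\mu)$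 is affine. *)

theory Defs
  imports "HOL-Analysis.Analysis"
begin

text \<open>Distributions over states are functions 'x => real; policies are functions
  'x => 'a => real (pi x a = probability of action a in state x);
  transitions p x a x' = p(x' | x, a); reward r x a mu.\<close>

definition is_dist :: "('b::finite \<Rightarrow> real) \<Rightarrow> bool" where
  "is_dist d \<longleftrightarrow> (\<forall>y. 0 \<le> d y) \<and> (\<Sum>y\<in>UNIV. d y) = 1"

definition is_policy :: "('x::finite \<Rightarrow> 'a::finite \<Rightarrow> real) \<Rightarrow> bool" where
  "is_policy \<pi> \<longleftrightarrow> (\<forall>x. is_dist (\<pi> x))"

definition is_transition :: "('x::finite \<Rightarrow> 'a::finite \<Rightarrow> 'x \<Rightarrow> real) \<Rightarrow> bool" where
  "is_transition p \<longleftrightarrow> (\<forall>x a. is_dist (p x a))"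

fun state_dist :: "('x::finite \<Rightarrow> 'a::finite \<Rightarrow> 'x \<Rightarrow> real) \<Rightarrow> ('x \<Rightarrow> real)
     \<Rightarrow> ('x \<Rightarrow> 'a \<Rightarrow> real) \<Rightarrow> nat \<Rightarrow> 'x \<Rightarrow> real" where
  "state_dist p \<mu>0 \<pi> 0 = \<mu>0"
| "state_dist p \<mu>0 \<pi> (Suc t) =
     (\<lambda>x'. \<Sum>x\<in>UNIV. \<Sum>a\<in>UNIV. state_dist p \<mu>0 \<pi> t x * \<pi> x a * p x a x')"

definition occ_disc :: "('x::finite \<Rightarrow> 'a::finite \<Rightarrow> 'x \<Rightarrow> real) \<Rightarrow> ('x \<Rightarrow> real)
     \<Rightarrow> real \<Rightarrow> ('x \<Rightarrow> 'a \<Rightarrow> real) \<Rightarrow> 'x \<Rightarrow> real" where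
  "occ_disc p \<mu>0 \<gamma> \<pi> x = (1 - \<gamma>) * (\<Sum>t. \<gamma> ^ t * state_dist p \<mu>0 \<pi> t x)"

definition occ_fh :: "('x::finite \<Rightarrow> 'a::finite \<Rightarrow> 'x \<Rightarrow> real) \<Rightarrow> ('x \<Rightarrow> real)
     \<Rightarrow> nat \<Rightarrow> ('x \<Rightarrow> 'a \<Rightarrow> real) \<Rightarrow> 'x \<Rightarrow> real" where
  "occ_fh p \<mu>0 T \<pi> x = (\<Sum>t<T. state_dist p \<mu>0 \<pi> t x) / real T"

definition Jval :: "(('x::finite \<Rightarrow> 'a::finite \<Rightarrow> real) \<Rightarrow> 'x \<Rightarrow> real)
     \<Rightarrow> ('x \<Rightarrow> 'a \<Rightarrow> ('x \<Rightarrow> real) \<Rightarrow> real)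
     \<Rightarrow> ('x \<Rightarrow> 'a \<Rightarrow> real) \<Rightarrow> ('x \<Rightarrow> real) \<Rightarrow> real" where
  "Jval occ r \<pi> \<mu> = (\<Sum>x\<in>UNIV. \<Sum>a\<in>UNIV. occ \<pi> x * \<pi> x a * r x a \<mu>)"

definition affine_on_simplex :: "(('x::finite \<Rightarrow> real) \<Rightarrow> real) \<Rightarrow> bool" where
  "affine_on_simplex f \<longleftrightarrow>
     (\<forall>\<mu>1 \<mu>2 t. is_dist \<mu>1 \<longrightarrow> is_dist \<mu>2 \<longrightarrow> 0 \<le> t \<longrightarrow> t \<le> 1 \<longrightarrow>
        f (\<lambda>x. t * \<mu>1 x + (1 - t) * \<mu>2 x) = t * f \<mu>1 + (1 - t) * f \<mu>2)"

definition mu_diff_affine :: "(('x::finite \<Rightarrow> 'a::finite \<Rightarrow> real) \<Rightarrow> ('x \<Rightarrow> real) \<Rightarrow> real) \<Rightarrow> bool" where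
  "mu_diff_affine J \<longleftrightarrow>
     (\<forall>\<pi> \<pi>'. is_policy \<pi> \<longrightarrow> is_policy \<pi>' \<longrightarrow> affine_on_simplex (\<lambda>\<mu>. J \<pi> \<mu> - J \<pi>' \<mu>))"

end

theory Submission imports Defs begin

lemma sd_dist:
  assumes "is_transition p" "is_dist \<mu>0" "is_policy \<pi>"
  shows "is_dist (state_dist p \<mu>0 \<pi> t)"
proof (induction t)
  case 0 then show ?case using assms by simp
next
  case (Suc t)
  let ?d = "state_dist p \<mu>0 \<pi> t"
  have nn: "\<And>y. 0 \<le> state_dist p \<mu>0 \<pi> (Suc t) y"
    using Suc assms unfolding is_dist_def is_policy_def is_transition_def
    by (auto intro!: sum_nonneg)
  have "(\<Sum>y\<in>UNIV. state_dist p \<mu>0 \<pi> (Suc t) y)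
      = (\<Sum>y\<in>UNIV. \<Sum>x\<in>UNIV. \<Sum>a\<in>UNIV. ?d x * \<pi> x a * p x a y)" by simp
  also have "\<dots> = (\<Sum>x\<in>UNIV. \<Sum>y\<in>UNIV. \<Sum>a\<in>UNIV. ?d x * \<pi> x a * p x a y)"
    by (rule sum.swap)
  also have "\<dots> = (\<Sum>x\<in>UNIV. \<Sum>a\<in>UNIV. \<Sum>y\<in>UNIV. ?d x * \<pi> x a * p x a y)"
    by (rule sum.cong[OF refl], rule sum.swap)
  also have "\<dots> = (\<Sum>x\<in>UNIV. \<Sum>a\<in>UNIV. ?d x * \<pi> x a * (\<Sum>y\<in>UNIV. p x a y))"
    by (simp only: sum_distrib_left)
  also have "\<dots> = (\<Sum>x\<in>UNIV. ?d x * (\<Sum>a\<in>UNIV. \<pi> x a))"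
    using assms(1) unfolding is_transition_def is_dist_def by (simp add: sum_distrib_left)
  also have "\<dots> = 1" using assms(3) Suc unfolding is_policy_def is_dist_def by simp
  finally show ?case using nn unfolding is_dist_def by blast
qed

lemma sd_le1:
  assumes "is_dist d" shows "d x \<le> 1"
proof -
  have "d x \<le> (\<Sum>y\<in>UNIV. d y)"
    using assms unfolding is_dist_def
    by (intro member_le_sum) auto
  then show ?thesis using assms unfolding is_dist_def by simp
qed

lemma occ_dist:
  assumes "is_transition p" "is_dist \<mu>0" "is_policy \<pi>"
    and occ_def: "(\<exists>\<gamma>. 0 \<le> \<gamma> \<and> \<gamma> < 1 \<and> occ = occ_disc p \<mu>0 \<gamma>) \<or> (\<exists>T>0. occ = occ_fh p \<mu>0 T)"
  shows "is_dist (occ \<pi>)"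
  using occ_def
proof
  assume "\<exists>\<gamma>. 0 \<le> \<gamma> \<and> \<gamma> < 1 \<and> occ = occ_disc p \<mu>0 \<gamma>"
  then obtain \<gamma> where g: "0 \<le> \<gamma>" "\<gamma> < 1" and o: "occ = occ_disc p \<mu>0 \<gamma>" by blast
  have D: "\<And>t. is_dist (state_dist p \<mu>0 \<pi> t)" using sd_dist assms(1-3) by blast
  have geo: "summable (\<lambda>t. \<gamma> ^ t)" using g by (simp add: summable_geometric)
  have sm: "summable (\<lambda>t. \<gamma> ^ t * state_dist p \<mu>0 \<pi> t x)" for x
  proof (rule summable_comparison_test'[OF geo])
    fix t show "norm (\<gamma> ^ t * state_dist p \<mu>0 \<pi> t x) \<le> \<gamma> ^ t"
      using D[of t] sd_le1[OF D[of t]] g unfolding is_dist_def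
      by (simp add: abs_mult mult_left_le)
  qed
  have nn: "0 \<le> occ \<pi> x" for x
    unfolding o occ_disc_def using g D unfolding is_dist_def
    by (intro mult_nonneg_nonneg suminf_nonneg sm) auto
  have "(\<Sum>x\<in>UNIV. occ \<pi> x) = (1 - \<gamma>) * (\<Sum>x\<in>UNIV. \<Sum>t. \<gamma> ^ t * state_dist p \<mu>0 \<pi> t x)"
    unfolding o occ_disc_def by (simp add: sum_distrib_left)
  also have "(\<Sum>x\<in>UNIV. \<Sum>t. \<gamma> ^ t * state_dist p \<mu>0 \<pi> t x)
       = (\<Sum>t. \<Sum>x\<in>UNIV. \<gamma> ^ t * state_dist p \<mu>0 \<pi> t x)"
    using sm by (subst suminf_sum) auto
  also have "\<dots> = (\<Sum>t. \<gamma> ^ t)"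
    using D unfolding is_dist_def by (simp add: sum_distrib_left[symmetric])
  also have "\<dots> = 1 / (1 - \<gamma>)" using g by (simp add: suminf_geometric)
  finally have "(\<Sum>x\<in>UNIV. occ \<pi> x) = 1" using g by simp
  then show ?thesis using nn unfolding is_dist_def by blast
next
  assume "\<exists>T>0. occ = occ_fh p \<mu>0 T"
  then obtain T where T: "T > 0" and o: "occ = occ_fh p \<mu>0 T" by blast
  have D: "\<And>t. is_dist (state_dist p \<mu>0 \<pi> t)" using sd_dist assms(1-3) by blast
  have nn: "0 \<le> occ \<pi> x" for x
    unfolding o occ_fh_def using D unfolding is_dist_def
    by (intro divide_nonneg_nonneg sum_nonneg) auto
  have "(\<Sum>x\<in>UNIV. occ \<pi> x) = (\<Sum>x\<in>UNIV. \<Sum>t<T. state_dist p \<mu>0 \<pi> t x) / real T"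
    unfolding o occ_fh_def by (simp add: sum_divide_distrib)
  also have "\<dots> = (\<Sum>t<T. \<Sum>x\<in>UNIV. state_dist p \<mu>0 \<pi> t x) / real T"
    by (rule arg_cong[where f="\<lambda>z. z / real T"], rule sum.swap)
  also have "\<dots> = 1" using D T unfolding is_dist_def by simp
  finally show ?thesis using nn unfolding is_dist_def by blast
qed

lemma affine_sum:
  assumes f: "affine_on_simplex f"
  shows "(\<forall>j<(n::nat). 0 \<le> w j) \<Longrightarrow> (\<Sum>j<n. w j) = 1 \<Longrightarrow> (\<forall>j<n. is_dist (m j)) \<Longrightarrow>
     is_dist (\<lambda>x. \<Sum>j<n. w j * m j x) \<and> f (\<lambda>x. \<Sum>j<n. w j * m j x) = (\<Sum>j<n. w j * f (m j))"
proof (induction n arbitrary: w)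
  case 0 then show ?case by simp
next
  case (Suc n)
  show ?case
  proof (cases "w n = 1")
    case True
    have z: "(\<Sum>j<n. w j) = 0" using Suc.prems True by simp
    have "\<forall>j\<in>{..<n}. w j = 0"
      using sum_nonneg_eq_0_iff[of "{..<n}" w] z Suc.prems(1) by auto
    then have e1: "(\<Sum>j<n. w j * m j x) = 0" for x by simp
    have e2: "(\<Sum>j<n. w j * f (m j)) = 0" using \<open>\<forall>j\<in>{..<n}. w j = 0\<close> by simp
    show ?thesis using e1 e2 True Suc.prems(3) by simp
  next
    case False
    define t where "t = 1 - w n"
    have wn1: "w n \<le> 1"
    proof -
      have "(\<Sum>j<n. w j) \<ge> 0" using Suc.prems(1) by (auto intro!: sum_nonneg)
      then show ?thesis using Suc.prems(2) by simp
    qed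
    have tp: "t > 0" using wn1 False unfolding t_def by simp
    define w' where "w' j = w j / t" for j
    have s': "(\<Sum>j<n. w' j) = 1"
      unfolding w'_def using Suc.prems(2) tp by (simp add: sum_divide_distrib[symmetric] t_def)
    have n': "\<forall>j<n. 0 \<le> w' j" using Suc.prems(1) tp unfolding w'_def by simp
    have IH: "is_dist (\<lambda>x. \<Sum>j<n. w' j * m j x) \<and> f (\<lambda>x. \<Sum>j<n. w' j * m j x) = (\<Sum>j<n. w' j * f (m j))"
      using Suc.IH[OF n' s'] Suc.prems(3) by simp
    have tw: "t * w' j = w j" for j using tp unfolding w'_def by simp
    have eq: "(\<lambda>x. \<Sum>j<Suc n. w j * m j x) = (\<lambda>x. t * (\<Sum>j<n. w' j * m j x) + (1 - t) * m n x)"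
    proof
      fix x
      have "t * (\<Sum>j<n. w' j * m j x) = (\<Sum>j<n. w j * m j x)"
        unfolding sum_distrib_left by (rule sum.cong) (simp_all add: tw[symmetric] mult.assoc)
      moreover have "1 - t = w n" unfolding t_def by simp
      ultimately show "(\<Sum>j<Suc n. w j * m j x) = t * (\<Sum>j<n. w' j * m j x) + (1 - t) * m n x"
        by simp
    qed
    have eqf: "(\<Sum>j<Suc n. w j * f (m j)) = t * (\<Sum>j<n. w' j * f (m j)) + (1 - t) * f (m n)"
    proof -
      have "t * (\<Sum>j<n. w' j * f (m j)) = (\<Sum>j<n. w j * f (m j))"
        unfolding sum_distrib_left by (rule sum.cong) (simp_all add: tw[symmetric] mult.assoc)
      moreover have "1 - t = w n" unfolding t_def by simp
      ultimately show ?thesis by simp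
    qed
    have dn: "is_dist (m n)" using Suc.prems(3) by simp
    have t1: "t \<le> 1" using Suc.prems(1) unfolding t_def by simp
    have fe: "f (\<lambda>x. t * (\<Sum>j<n. w' j * m j x) + (1 - t) * m n x) = t * f (\<lambda>x. \<Sum>j<n. w' j * m j x) + (1 - t) * f (m n)"
      using f[unfolded affine_on_simplex_def, rule_format, OF conjunct1[OF IH] dn less_imp_le[OF tp] t1] .
    have dd: "is_dist (\<lambda>x. t * (\<Sum>j<n. w' j * m j x) + (1 - t) * m n x)"
    proof -
      have a: "\<forall>y. 0 \<le> (\<Sum>j<n. w' j * m j y)" "(\<Sum>y\<in>UNIV. \<Sum>j<n. w' j * m j y) = 1"
        using conjunct1[OF IH] unfolding is_dist_def by auto
      have b: "\<forall>y. 0 \<le> m n y" "(\<Sum>y\<in>UNIV. m n y) = 1" using dn unfolding is_dist_def by auto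
      have "(\<Sum>y\<in>UNIV. t * (\<Sum>j<n. w' j * m j y) + (1 - t) * m n y)
          = t * (\<Sum>y\<in>UNIV. \<Sum>j<n. w' j * m j y) + (1 - t) * (\<Sum>y\<in>UNIV. m n y)"
        by (simp only: sum.distrib sum_distrib_left)
      also have "\<dots> = 1" using a b by simp
      finally show ?thesis unfolding is_dist_def using a b tp t1
        by (auto intro!: add_nonneg_nonneg mult_nonneg_nonneg)
    qed
    show ?thesis unfolding eq eqf using fe dd IH by simp
  qed
qed

theorem mainTheorem8:
  fixes p :: "'x::finite \<Rightarrow> 'a::finite \<Rightarrow> 'x \<Rightarrow> real"
    and \<mu>0 :: "'x \<Rightarrow> real"
    and r :: "'x \<Rightarrow> 'a \<Rightarrow> ('x \<Rightarrow> real) \<Rightarrow> real"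
    and occ :: "('x \<Rightarrow> 'a \<Rightarrow> real) \<Rightarrow> 'x \<Rightarrow> real"
    and pols :: "nat \<Rightarrow> ('x \<Rightarrow> 'a \<Rightarrow> real)"
    and n :: nat
    and \<nu> :: "nat \<Rightarrow> real"
  assumes trans: "is_transition p"
    and init: "is_dist \<mu>0"
    and occ_def: "(\<exists>\<gamma>. 0 \<le> \<gamma> \<and> \<gamma> < 1 \<and> occ = occ_disc p \<mu>0 \<gamma>) \<or> (\<exists>T>0. occ = occ_fh p \<mu>0 T)"
    and pols: "\<forall>i<n. is_policy (pols i)"
    and diff_aff: "mu_diff_affine (Jval occ r)"
    and nu_nonneg: "\<forall>i<n. 0 \<le> \<nu> i"
    and nu_sum: "(\<Sum>i<n. \<nu> i) = 1"
    and sym_ne: "\<forall>k<n. (\<Sum>j<n. Jval occ r (pols k) (occ (pols j)) * \<nu> j)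
                     \<le> (\<Sum>i<n. \<Sum>j<n. \<nu> i * Jval occ r (pols i) (occ (pols j)) * \<nu> j)"
  shows "\<forall>k<n.
           Jval occ r (pols k) (\<lambda>x. \<Sum>j<n. \<nu> j * occ (pols j) x)
           - (\<Sum>i<n. \<nu> i * Jval occ r (pols i) (\<lambda>x. \<Sum>j<n. \<nu> j * occ (pols j) x)) \<le> 0"
proof (intro allI impI)
  fix k assume k: "k < n"
  define J where "J = Jval occ r"
  define mb where "mb = (\<lambda>x. \<Sum>j<n. \<nu> j * occ (pols j) x)"
  have dists: "\<forall>j<n. is_dist (occ (pols j))"
    using occ_dist[OF trans init _ occ_def] pols by blast
  have key: "J (pols k) mb - J (pols i) mb = (\<Sum>j<n. \<nu> j * (J (pols k) (occ (pols j)) - J (pols i) (occ (pols j))))"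
    if i: "i < n" for i
  proof -
    have "affine_on_simplex (\<lambda>\<mu>. J (pols k) \<mu> - J (pols i) \<mu>)"
      using diff_aff pols k i unfolding mu_diff_affine_def J_def by blast
    from affine_sum[OF this, of n \<nu> "\<lambda>j. occ (pols j)"] nu_nonneg nu_sum dists
    show ?thesis unfolding mb_def by blast
  qed
  have A0: "(\<Sum>i<n. \<Sum>j<n. \<nu> i * (\<nu> j * J (pols k) (occ (pols j)))) = (\<Sum>j<n. \<Sum>i<n. \<nu> i * (\<nu> j * J (pols k) (occ (pols j))))"
    by (rule sum.swap)
  also have "\<dots> = (\<Sum>j<n. (\<Sum>i<n. \<nu> i) * (\<nu> j * J (pols k) (occ (pols j))))"
    by (simp only: sum_distrib_right)
  also have "\<dots> = (\<Sum>j<n. J (pols k) (occ (pols j)) * \<nu> j)"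
    using nu_sum by (simp add: mult_ac)
  finally have A: "(\<Sum>i<n. \<Sum>j<n. \<nu> i * (\<nu> j * J (pols k) (occ (pols j)))) = (\<Sum>j<n. J (pols k) (occ (pols j)) * \<nu> j)" .
  have "J (pols k) mb - (\<Sum>i<n. \<nu> i * J (pols i) mb) = (\<Sum>i<n. \<nu> i * (J (pols k) mb - J (pols i) mb))"
    using nu_sum by (simp add: right_diff_distrib sum_subtractf sum_distrib_right[symmetric])
  also have "\<dots> = (\<Sum>i<n. \<nu> i * (\<Sum>j<n. \<nu> j * (J (pols k) (occ (pols j)) - J (pols i) (occ (pols j)))))"
    using key by simp
  also have "\<dots> = (\<Sum>i<n. \<Sum>j<n. \<nu> i * (\<nu> j * J (pols k) (occ (pols j)))) - (\<Sum>i<n. \<Sum>j<n. \<nu> i * J (pols i) (occ (pols j)) * \<nu> j)"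
    by (simp add: sum_distrib_left right_diff_distrib sum_subtractf mult_ac)
  also have "\<dots> = (\<Sum>j<n. J (pols k) (occ (pols j)) * \<nu> j) - (\<Sum>i<n. \<Sum>j<n. \<nu> i * J (pols i) (occ (pols j)) * \<nu> j)"
    using A by simp
  also have "\<dots> \<le> 0" using sym_ne k unfolding J_def by simp
  finally show "Jval occ r (pols k) (\<lambda>x. \<Sum>j<n. \<nu> j * occ (pols j) x)
           - (\<Sum>i<n. \<nu> i * Jval occ r (pols i) (\<lambda>x. \<Sum>j<n. \<nu> j * occ (pols j) x)) \<le> 0"
    unfolding J_def mb_def .
qed

end
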